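(* Let $0<q\leq 1$, let $D\in\mathbb{R}^{n\times d}$ be a frame with frame bounds $0<\mathcal{L}\leq\mathcal{U}<\infty$, $\kappa=\mathcal{U}/\mathcal{L}$, let $A\in\mathbb{R}^{m\times n}$, and let $s<a$ be positive integers. Assume $A$ satisfies the $(D^{\dagger},q)$-RIP of order $s+a$ (with $(D^\dagger,q)$-RIP constants $\delta_a$ and $\delta_{s+a}<1$), and let $\Delta=\frac{1+\delta_a}{1-\delta_{s+a}}$. Let $h\in\mathbb{R}^n$ be arbitrary and let $T=T_0,T_1,T_2,\dots$ and $T_{01}=T_0\cup T_1$ be the index sets associated with $D^*h$ as described in the context. Then $$\|DD_{T_{01}}^*h\|_2^2\leq\kappa\,\mathcal{U}\,\Delta^{2/q}a^{1-2/q}\left(\|D_{T^c}^*h\|_q^q+\frac{\mathcal{L}^{q/2}a^{1-q/2}\|Ah\|_q^q}{1+\delta_a}\right)^{2/q}.$$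
   Context: $D$ is a frame with frame bounds $\mathcal{L},\mathcal{U}$ if $\mathcal{L}\|f\|_2^2\leq\|D^*f\|_2^2\leq\mathcal{U}\|f\|_2^2$ for all $f\in\mathbb{R}^n$; $D^{\dagger}=(DD^* )^{-1}D$. $A$ obeys the $(D^\dagger,q)$-RIP of order $k$ with constant $\delta\in[0,1)$ if $(1-\delta)\|D^\dagger v\|_2^q\leq\|AD^\dagger v\|_q^q\leq(1+\delta)\|D^\dagger v\|_2^q$ for all $v\in\mathbb{R}^d$ with at most $k$ nonzero entries; $\delta_k$ is the smallest such $\delta$. Index sets: write $D^*h=(x_1,\dots,x_d)^T$ and, after reordering indices, assume $|x_1|\geq|x_2|\geq\cdots\geq|x_d|$; set $T=T_0=\{1,\dots,s\}$, $T_1=\{s+1,\dots,s+a\}$, $T_i=\{s+(i-1)a+1,\dots,s+ia\}$ for $i\geq 2$ (the last one possibly of size less than $a$), $T_{01}=T_0\cup T_1$, and $T^c=[d]\setminus T$. For $S\subset[d]$, $D_S$ is the $n\times d$ matrix obtained from $D$ by setting the columns indexed outside $S$ to zero, so $D_S^*h$ is $D^*h$ restricted to $S$. *)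

theory Defs
  imports "HOL-Analysis.Analysis"
begin

text \<open>Vectors in R^k are modelled as real^'k (finite index type 'k); an n x d matrix
  is real^'d^'n. The adjoint D^* is the transpose.\<close>

definition qnorm_pow :: "real \<Rightarrow> real^'k \<Rightarrow> real" where
  "qnorm_pow q x = (\<Sum>i\<in>UNIV. \<bar>x $ i\<bar> powr q)"

definition is_frame :: "real^'d^'n \<Rightarrow> real \<Rightarrow> real \<Rightarrow> bool" where
  "is_frame D L U \<longleftrightarrow> 0 < L \<and> L \<le> U \<and>
     (\<forall>f::real^'n. L * (norm f)\<^sup>2 \<le> (norm (transpose D *v f))\<^sup>2 \<and>
                   (norm (transpose D *v f))\<^sup>2 \<le> U * (norm f)\<^sup>2)"

definition dagger :: "real^'d^'n \<Rightarrow> real^'d^'n" where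
  "dagger D = matrix_inv (D ** transpose D) ** D"

definition dq_RIP :: "real^'d^'n \<Rightarrow> real^'n^'m \<Rightarrow> real \<Rightarrow> nat \<Rightarrow> real \<Rightarrow> bool" where
  "dq_RIP D A q k \<delta> \<longleftrightarrow> 0 \<le> \<delta> \<and> \<delta> < 1 \<and>
     (\<forall>v::real^'d. card {i. v $ i \<noteq> 0} \<le> k \<longrightarrow>
        (1 - \<delta>) * (norm (dagger D *v v)) powr q \<le> qnorm_pow q (A *v (dagger D *v v)) \<and>
        qnorm_pow q (A *v (dagger D *v v)) \<le> (1 + \<delta>) * (norm (dagger D *v v)) powr q)"

definition rip_const :: "real^'d^'n \<Rightarrow> real^'n^'m \<Rightarrow> real \<Rightarrow> nat \<Rightarrow> real" where
  "rip_const D A q k = Inf {\<delta>. dq_RIP D A q k \<delta>}"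

text \<open>Restriction of a vector to an index set S (other entries set to 0);
  restr S (D^* h) = D_S^* h.\<close>
definition restr :: "'k set \<Rightarrow> real^'k \<Rightarrow> real^'k" where
  "restr S x = (\<chi> i. if i \<in> S then x $ i else 0)"

definition decreasing_order :: "real^'d \<Rightarrow> (nat \<Rightarrow> 'd) \<Rightarrow> bool" where
  "decreasing_order x \<sigma> \<longleftrightarrow> bij_betw \<sigma> {..<CARD('d)} UNIV \<and>
     (\<forall>i j. i \<le> j \<longrightarrow> j < CARD('d) \<longrightarrow> \<bar>x $ (\<sigma> j)\<bar> \<le> \<bar>x $ (\<sigma> i)\<bar>)"

end

theory Submission
  imports Defs
begin

lemma inner_transpose: "inner (transpose D *v f) w = inner f (D *v (w::real^'d))"
  by (simp add: inner_vec_def matrix_vector_mult_def transpose_def sum_distrib_left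
      sum_distrib_right ac_simps) (subst sum.swap, simp add: ac_simps)

lemma frame_D_bound:
  assumes fr: "is_frame D L U"
  shows "norm (D *v w) \<le> sqrt U * norm (w::real^'d)"
proof -
  have U: "0 \<le> U" using fr by (auto simp: is_frame_def)
  have "(norm (D *v w))\<^sup>2 = inner (transpose D *v (D *v w)) w"
    by (simp only: inner_transpose power2_norm_eq_inner)
  also have "\<dots> \<le> norm (transpose D *v (D *v w)) * norm w" by (rule norm_cauchy_schwarz)
  also have "norm (transpose D *v (D *v w)) \<le> sqrt U * norm (D *v w)"
  proof -
    have "(norm (transpose D *v (D *v w)))\<^sup>2 \<le> U * (norm (D *v w))\<^sup>2" using fr by (auto simp: is_frame_def)
    also have "\<dots> = (sqrt U * norm (D *v w))\<^sup>2" using U by (simp add: power_mult_distrib)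
    finally show ?thesis by (rule power2_le_imp_le) (use U in simp)
  qed
  hence "norm (transpose D *v (D *v w)) * norm w \<le> sqrt U * norm (D *v w) * norm w"
    by (simp add: mult_right_mono)
  finally have "(norm (D *v w))\<^sup>2 \<le> sqrt U * norm (D *v w) * norm w" by simp
  thus ?thesis
    using U by (cases "norm (D *v w) = 0") (auto simp: power2_eq_square)
qed

lemma frame_inv:
  assumes fr: "is_frame D L U"
  shows "matrix_inv (D ** transpose D) ** (D ** transpose D) = mat 1"
    "(D ** transpose D) ** matrix_inv (D ** transpose D) = mat 1"
proof -
  let ?M = "D ** transpose D"
  have L: "0 < L" using fr by (auto simp: is_frame_def)
  have "\<forall>y. ?M *v y = 0 \<longrightarrow> y = 0"
  proof (intro allI impI)
    fix y assume "?M *v y = 0"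
    hence "inner (transpose D *v y) (transpose D *v y) = 0"
      by (simp only: inner_transpose matrix_vector_mul_assoc inner_zero_right)
    hence "(norm (transpose D *v y))\<^sup>2 = 0" by (simp add: power2_norm_eq_inner)
    moreover have "L * (norm y)\<^sup>2 \<le> (norm (transpose D *v y))\<^sup>2" using fr by (auto simp: is_frame_def)
    ultimately show "y = 0" using L
      by (metis mult_le_0_iff norm_eq_zero not_le zero_less_power2)
  qed
  then obtain B where B: "B ** ?M = mat 1" using matrix_left_invertible_ker(1) by blast
  hence inv: "invertible ?M" using invertible_left_inverse by blast
  then have "?M ** matrix_inv ?M = mat 1 \<and> matrix_inv ?M ** ?M = mat 1"
    unfolding matrix_inv_def invertible_def by (rule someI_ex)
  thus "matrix_inv ?M ** ?M = mat 1" "?M ** matrix_inv ?M = mat 1" by auto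
qed

lemma dagger_props:
  assumes fr: "is_frame D L U"
  shows "(D ** transpose D) *v (dagger D *v v) = D *v v"
    "dagger D *v (transpose D *v h) = h"
proof -
  let ?M = "D ** transpose D"
  show "?M *v (dagger D *v v) = D *v v"
    by (simp add: dagger_def matrix_vector_mul_assoc matrix_mul_assoc frame_inv[OF fr])
  have "dagger D *v (transpose D *v h) = (matrix_inv ?M ** ?M) *v h"
    by (simp only: dagger_def matrix_vector_mul_assoc matrix_mul_assoc)
  then show "dagger D *v (transpose D *v h) = h"
    by (simp only: frame_inv[OF fr] matrix_vector_mul_lid)
qed

lemma dagger_bound:
  assumes fr: "is_frame D L U"
  shows "norm (dagger D *v v) \<le> norm v / sqrt L"
proof -
  define y where "y = dagger D *v v"
  have L: "0 < L" using fr by (auto simp: is_frame_def)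
  have My: "D *v (transpose D *v y) = D *v v"
    using dagger_props(1)[OF fr, of v] by (simp add: y_def matrix_vector_mul_assoc matrix_mul_assoc)
  have "(norm (transpose D *v y))\<^sup>2 = inner y (D *v (transpose D *v y))"
    by (simp only: inner_transpose power2_norm_eq_inner)
  also have "\<dots> = inner y (D *v v)" by (simp only: My)
  also have "\<dots> = inner (transpose D *v y) v" by (simp only: inner_transpose)
  also have "\<dots> \<le> norm (transpose D *v y) * norm v" by (rule norm_cauchy_schwarz)
  finally have 1: "(norm (transpose D *v y))\<^sup>2 \<le> norm (transpose D *v y) * norm v" .
  have 2: "norm (transpose D *v y) \<le> norm v"
    using 1 by (cases "norm (transpose D *v y) = 0") (auto simp: power2_eq_square)
  have "L * (norm y)\<^sup>2 \<le> (norm (transpose D *v y))\<^sup>2" using fr by (auto simp: is_frame_def)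
  also have "\<dots> \<le> (norm v)\<^sup>2" using 2 by (simp add: power_mono)
  finally have "(norm y)\<^sup>2 \<le> (norm v / sqrt L)\<^sup>2" using L
    by (simp add: power_divide field_simps)
  hence "norm y \<le> norm v / sqrt L" by (rule power2_le_imp_le) (use L in simp)
  thus ?thesis by (simp add: y_def)
qed

lemma D_dagger_bound:
  assumes fr: "is_frame D L U"
  shows "norm (D *v v) \<le> U * norm (dagger D *v v)"
proof -
  define y where "y = dagger D *v v"
  have U: "0 \<le> U" using fr by (auto simp: is_frame_def)
  have "D *v v = D *v (transpose D *v y)"
    using dagger_props(1)[OF fr, of v] by (simp add: y_def matrix_vector_mul_assoc matrix_mul_assoc)
  hence "norm (D *v v) \<le> sqrt U * norm (transpose D *v y)" using frame_D_bound[OF fr] by simp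
  also have "norm (transpose D *v y) \<le> sqrt U * norm y"
  proof -
    have "(norm (transpose D *v y))\<^sup>2 \<le> U * (norm y)\<^sup>2" using fr by (auto simp: is_frame_def)
    also have "\<dots> = (sqrt U * norm y)\<^sup>2" using U by (simp add: power_mult_distrib)
    finally show ?thesis by (rule power2_le_imp_le) (use U in simp)
  qed
  hence "sqrt U * norm (transpose D *v y) \<le> sqrt U * (sqrt U * norm y)" by (rule mult_left_mono) (use U in auto)
  finally show ?thesis using U by (simp add: y_def mult.assoc[symmetric])
qed

lemma powr_add_le:
  fixes a b q :: real
  assumes "0 \<le> a" "0 \<le> b" "0 < q" "q \<le> 1"
  shows "(a + b) powr q \<le> a powr q + b powr q"
proof (cases "a + b = 0")
  case True thus ?thesis using assms by auto
next
  case False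
  hence s: "0 < a + b" using assms by auto
  define t where "t = a / (a+b)"
  have t0: "0 \<le> t" "t \<le> 1" using assms s by (auto simp: t_def)
  have t1: "0 \<le> 1 - t" "1 - t \<le> 1" using t0 by auto
  have "t \<le> t powr q" using powr_mono'[OF assms(4) t0] t0 by simp
  moreover have "1 - t \<le> (1-t) powr q" using powr_mono'[OF assms(4) t1] t1 by simp
  moreover have "a = (a+b) * t" "b = (a+b) * (1 - t)" using s by (auto simp: t_def field_simps)
  hence "a powr q = (a+b) powr q * t powr q" "b powr q = (a+b) powr q * (1-t) powr q"
    by (metis powr_mult s less_imp_le t0(1) t1(1))+
  ultimately have "(a+b) powr q * t + (a+b) powr q * (1-t) \<le> a powr q + b powr q"
    by (metis add_mono mult_left_mono powr_ge_zero)
  thus ?thesis by (simp add: algebra_simps)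
qed

definition qn where "qn = qnorm_pow"

lemma qnorm_pow_nonneg: "0 \<le> qnorm_pow q x"
  by (simp add: qnorm_pow_def sum_nonneg)

lemma qnorm_pow_add:
  assumes "0 < q" "q \<le> 1"
  shows "qnorm_pow q (x + y) \<le> qnorm_pow q x + qnorm_pow q y"
  unfolding qnorm_pow_def sum.distrib[symmetric]
proof (rule sum_mono)
  fix i
  have "\<bar>(x + y) $ i\<bar> powr q \<le> (\<bar>x $ i\<bar> + \<bar>y $ i\<bar>) powr q"
    using assms by (intro powr_mono2) (auto simp: abs_triangle_ineq)
  also have "\<dots> \<le> \<bar>x $ i\<bar> powr q + \<bar>y $ i\<bar> powr q" using assms by (intro powr_add_le) auto
  finally show "\<bar>(x + y) $ i\<bar> powr q \<le> \<bar>x $ i\<bar> powr q + \<bar>y $ i\<bar> powr q" .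
qed

lemma qnorm_pow_minus: "qnorm_pow q (- x) = qnorm_pow q x"
  by (simp add: qnorm_pow_def)

lemma qnorm_pow_sum:
  assumes "0 < q" "q \<le> 1" "finite I"
  shows "qnorm_pow q (\<Sum>j\<in>I. f j) \<le> (\<Sum>j\<in>I. qnorm_pow q (f j))"
  using assms(3)
proof (induction I rule: finite_induct)
  case empty thus ?case by (simp add: qnorm_pow_def)
next
  case (insert j I)
  thus ?case using qnorm_pow_add[OF assms(1,2), of "f j" "sum f I"] by simp
qed

lemma dq_RIP_mono: "dq_RIP D A q k \<delta> \<Longrightarrow> k' \<le> k \<Longrightarrow> dq_RIP D A q k' \<delta>"
  unfolding dq_RIP_def by (meson order_trans)

lemma rip_const_RIP:
  assumes ex: "\<exists>\<delta>. dq_RIP D A q k \<delta>"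
  shows "dq_RIP D A q k (rip_const D A q k)"
proof -
  define S where "S = {\<delta>. dq_RIP D A q k \<delta>}"
  obtain \<delta>0 where d0: "\<delta>0 \<in> S" using ex by (auto simp: S_def)
  have bdd: "bdd_below S" unfolding S_def dq_RIP_def by (rule bdd_belowI[of _ 0]) auto
  have ne: "S \<noteq> {}" using d0 by auto
  define c where "c = Inf S"
  have c0: "0 \<le> c" unfolding c_def by (rule cInf_greatest[OF ne]) (auto simp: S_def dq_RIP_def)
  have c1: "c < 1" using cInf_lower[OF d0 bdd] d0 by (auto simp: c_def S_def dq_RIP_def)
  have main: "(1 - c) * n \<le> Qv \<and> Qv \<le> (1 + c) * n"
    if n0: "0 \<le> n" and Q0: "0 \<le> Qv" and hyp: "\<And>\<delta>. \<delta> \<in> S \<Longrightarrow> (1 - \<delta>) * n \<le> Qv \<and> Qv \<le> (1 + \<delta>) * n"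
    for n Qv :: real
  proof (cases "n = 0")
    case True thus ?thesis using hyp[OF d0] Q0 by auto
  next
    case False
    hence np: "0 < n" using n0 by auto
    have "1 - Qv / n \<le> c" unfolding c_def
    proof (rule cInf_greatest[OF ne])
      fix \<delta> assume "\<delta> \<in> S"
      hence "(1 - \<delta>) * n \<le> Qv" using hyp by auto
      thus "1 - Qv / n \<le> \<delta>" using np by (simp add: field_simps)
    qed
    moreover have "Qv / n - 1 \<le> c" unfolding c_def
    proof (rule cInf_greatest[OF ne])
      fix \<delta> assume "\<delta> \<in> S"
      hence "Qv \<le> (1 + \<delta>) * n" using hyp by auto
      thus "Qv / n - 1 \<le> \<delta>" using np by (simp add: field_simps)
    qed
    ultimately show ?thesis using np by (simp add: field_simps)
  qed
  have "dq_RIP D A q k c"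
    unfolding dq_RIP_def
  proof (intro conjI c0 c1 allI impI)
    fix v :: "real^'a" assume sp: "card {i. v $ i \<noteq> 0} \<le> k"
    have "(1 - c) * norm (dagger D *v v) powr q \<le> qnorm_pow q (A *v (dagger D *v v)) \<and>
          qnorm_pow q (A *v (dagger D *v v)) \<le> (1 + c) * norm (dagger D *v v) powr q"
      by (rule main) (use sp in \<open>auto simp: qnorm_pow_nonneg S_def dq_RIP_def\<close>)
    thus "(1 - c) * norm (dagger D *v v) powr q \<le> qnorm_pow q (A *v (dagger D *v v))"
         "qnorm_pow q (A *v (dagger D *v v)) \<le> (1 + c) * norm (dagger D *v v) powr q" by auto
  qed
  thus ?thesis by (simp add: c_def S_def rip_const_def)
qed

definition blk :: "nat \<Rightarrow> nat \<Rightarrow> nat \<Rightarrow> nat \<Rightarrow> nat set" where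
  "blk s a N j = {s + j * a..<s + (j + 1) * a} \<inter> {..<N}"

lemma blk_iff:
  assumes "0 < a"
  shows "k \<in> blk s a N j \<longleftrightarrow> k < N \<and> s \<le> k \<and> j = (k - s) div a"
proof
  assume h: "k \<in> blk s a N j"
  hence "a * j \<le> k - s" "k - s < a * Suc j" by (auto simp: blk_def algebra_simps)
  hence "(k - s) div a = j" by (rule div_nat_eqI)
  thus "k < N \<and> s \<le> k \<and> j = (k - s) div a" using h by (auto simp: blk_def)
next
  assume h: "k < N \<and> s \<le> k \<and> j = (k - s) div a"
  have "(k - s) div a * a \<le> k - s" by (rule div_times_less_eq_dividend)
  hence "s + (k - s) div a * a \<le> k" using h by linarith
  hence "s + j * a \<le> k" using h by simp
  moreover have "k - s < (j+1) * a" using h assms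
    by (metis Suc_eq_plus1 div_less_iff_less_mult lessI)
  ultimately show "k \<in> blk s a N j" using h by (auto simp: blk_def)
qed

lemma restr_sums:
  fixes x :: "real^'d"
  assumes bij: "bij_betw \<sigma> {..<CARD('d)} (UNIV::'d set)" and G: "G \<subseteq> {..<CARD('d)}"
  shows "qnorm_pow q (restr (\<sigma> ` G) x) = (\<Sum>k\<in>G. \<bar>x $ \<sigma> k\<bar> powr q)"
    "(norm (restr (\<sigma> ` G) x))\<^sup>2 = (\<Sum>k\<in>G. (x $ \<sigma> k)\<^sup>2)"
proof -
  have inj: "inj_on \<sigma> {..<CARD('d)}" using bij by (auto simp: bij_betw_def)
  have mem: "\<sigma> k \<in> \<sigma> ` G \<longleftrightarrow> k \<in> G" if "k < CARD('d)" for k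
    using inj G that by (auto simp: inj_on_def)
  have GI: "{..<CARD('d)} \<inter> G = G" using G by auto
  have "qnorm_pow q (restr (\<sigma> ` G) x) = (\<Sum>k<CARD('d). \<bar>restr (\<sigma> ` G) x $ \<sigma> k\<bar> powr q)"
    unfolding qnorm_pow_def by (rule sum.reindex_bij_betw[OF bij, symmetric])
  also have "\<dots> = (\<Sum>k<CARD('d). if k \<in> G then \<bar>x $ \<sigma> k\<bar> powr q else 0)"
    by (rule sum.cong) (auto simp: restr_def mem)
  also have "\<dots> = (\<Sum>k\<in>G. \<bar>x $ \<sigma> k\<bar> powr q)"
    by (simp add: sum.inter_restrict[symmetric] GI)
  finally show "qnorm_pow q (restr (\<sigma> ` G) x) = (\<Sum>k\<in>G. \<bar>x $ \<sigma> k\<bar> powr q)" .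
  have "(norm (restr (\<sigma> ` G) x))\<^sup>2 = (\<Sum>i\<in>UNIV. (restr (\<sigma> ` G) x $ i)\<^sup>2)"
    unfolding power2_norm_eq_inner inner_vec_def by (simp add: power2_eq_square)
  also have "\<dots> = (\<Sum>k<CARD('d). (restr (\<sigma> ` G) x $ \<sigma> k)\<^sup>2)"
    by (rule sum.reindex_bij_betw[OF bij, symmetric])
  also have "\<dots> = (\<Sum>k<CARD('d). if k \<in> G then (x $ \<sigma> k)\<^sup>2 else 0)"
    by (rule sum.cong) (auto simp: restr_def mem)
  also have "\<dots> = (\<Sum>k\<in>G. (x $ \<sigma> k)\<^sup>2)"
    by (simp add: sum.inter_restrict[symmetric] GI)
  finally show "(norm (restr (\<sigma> ` G) x))\<^sup>2 = (\<Sum>k\<in>G. (x $ \<sigma> k)\<^sup>2)" .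
qed

lemma restr_sparse: "card {i. restr S x $ i \<noteq> 0} \<le> card (S::'d::finite set)"
  by (rule card_mono) (auto simp: restr_def)

lemma block_bound:
  fixes y :: "nat \<Rightarrow> real"
  assumes q: "0 < q" "q \<le> 1" and a: "0 < a"
    and dec: "\<And>k k'. k \<le> k' \<Longrightarrow> k' < N \<Longrightarrow> y k' \<le> y k"
    and y0: "\<And>k. 0 \<le> y k"
  shows "(\<Sum>k\<in>blk s a N (Suc i). (y k)\<^sup>2) powr (q/2) \<le> real a powr (q/2-1) * (\<Sum>k\<in>blk s a N i. y k powr q)"
proof (cases "blk s a N (Suc i) = {}")
  case True thus ?thesis by (simp add: mult_nonneg_nonneg sum_nonneg)
next
  case False
  then obtain k0 where k0: "k0 \<in> blk s a N (Suc i)" by auto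
  define Qp where "Qp = (\<Sum>k\<in>blk s a N i. y k powr q)"
  have full: "blk s a N i = {s + i * a..<s + (i+1) * a}"
  proof -
    have "s + (i+1) * a \<le> N" using k0 by (auto simp: blk_def)
    thus ?thesis by (auto simp: blk_def)
  qed
  have cardp: "card (blk s a N i) = a"
    using full by simp
  have each: "y k powr q \<le> Qp / a" if k: "k \<in> blk s a N (Suc i)" for k
  proof -
    have "(\<Sum>k'\<in>blk s a N i. y k powr q) \<le> Qp" unfolding Qp_def
    proof (rule sum_mono)
      fix k' assume k': "k' \<in> blk s a N i"
      have "k' \<le> k" "k < N" using k k' full by (auto simp: blk_def)
      thus "y k powr q \<le> y k' powr q" using dec y0 q by (intro powr_mono2) auto
    qed
    hence "a * y k powr q \<le> Qp" using cardp by simp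
    thus ?thesis using a by (simp add: field_simps)
  qed
  have "(\<Sum>k\<in>blk s a N (Suc i). (y k)\<^sup>2) \<le> (\<Sum>k\<in>blk s a N (Suc i). (Qp / a) powr (2/q))"
  proof (rule sum_mono)
    fix k assume k: "k \<in> blk s a N (Suc i)"
    have "(y k)\<^sup>2 = (y k powr q) powr (2/q)"
      using q y0[of k] by (simp add: powr_powr)
    also have "\<dots> \<le> (Qp / a) powr (2/q)" using each[OF k] q by (intro powr_mono2) auto
    finally show "(y k)\<^sup>2 \<le> (Qp / a) powr (2/q)" .
  qed
  also have "\<dots> = card (blk s a N (Suc i)) * (Qp / a) powr (2/q)" by simp
  also have "\<dots> \<le> a * (Qp / a) powr (2/q)"
  proof -
    have "card (blk s a N (Suc i)) \<le> card {s + Suc i * a..<s + (Suc i + 1) * a}"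
      unfolding blk_def by (rule card_mono) auto
    hence "card (blk s a N (Suc i)) \<le> a" by simp
    thus ?thesis by (intro mult_right_mono) auto
  qed
  finally have S: "(\<Sum>k\<in>blk s a N (Suc i). (y k)\<^sup>2) \<le> a * (Qp / a) powr (2/q)" .
  have Qp0: "0 \<le> Qp" by (simp add: Qp_def sum_nonneg)
  have "(\<Sum>k\<in>blk s a N (Suc i). (y k)\<^sup>2) powr (q/2) \<le> (a * (Qp / a) powr (2/q)) powr (q/2)"
    using S q by (intro powr_mono2) (auto intro: sum_nonneg)
  also have "\<dots> = real a powr (q/2) * (Qp / a)"
    using q a Qp0 by (simp add: powr_mult powr_powr)
  also have "\<dots> = real a powr (q/2-1) * Qp"
    using a by (simp add: powr_diff)
  finally show ?thesis by (simp add: Qp_def)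
qed

lemma mv_sum: "finite S \<Longrightarrow> (M::real^'a^'b) *v (\<Sum>j\<in>S. f j) = (\<Sum>j\<in>S. M *v f j)"
  by (induction S rule: finite_induct) (auto simp: matrix_vector_right_distrib)

lemma blk_sub: "blk s a N j \<subseteq> {..<N}" by (auto simp: blk_def)

lemma decomp:
  fixes x :: "real^'d"
  assumes bij: "bij_betw \<sigma> {..<CARD('d)} (UNIV::'d set)" and a: "0 < a"
  shows "x = restr (\<sigma> ` {..<min (s + a) CARD('d)}) x + (\<Sum>j\<in>{1..<CARD('d)}. restr (\<sigma> ` blk s a CARD('d) j) x)"
proof -
  let ?N = "CARD('d)"
  have inj: "inj_on \<sigma> {..<?N}" using bij by (auto simp: bij_betw_def)
  have mem: "\<sigma> k \<in> \<sigma> ` G \<longleftrightarrow> k \<in> G" if "k < ?N" "G \<subseteq> {..<?N}" for k G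
    using inj that by (auto simp: inj_on_def)
  show ?thesis
  proof (subst vec_eq_iff, intro allI)
    fix i
    obtain k where k: "k < ?N" "\<sigma> k = i" using bij by (metis bij_betw_iff_bijections lessThan_iff UNIV_I)
    have c1: "restr (\<sigma> ` {..<min (s + a) ?N}) x $ i = (if k < s + a then x $ i else 0)"
      using mem[OF k(1), of "{..<min (s + a) ?N}"] k by (auto simp: restr_def)
    have c2: "(\<Sum>j\<in>{1..<?N}. restr (\<sigma> ` blk s a ?N j) x) $ i
        = (\<Sum>j\<in>{1..<?N}. if j = (k - s) div a \<and> s \<le> k then x $ i else 0)"
      unfolding sum_component
      by (rule sum.cong) (use mem[OF k(1) blk_sub] k blk_iff[OF a] in \<open>auto simp: restr_def\<close>)
    show "x $ i = (restr (\<sigma> ` {..<min (s + a) ?N}) x + (\<Sum>j\<in>{1..<?N}. restr (\<sigma> ` blk s a ?N j) x)) $ i"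
    proof (cases "k < s + a")
      case True
      have "(k - s) div a = 0" if "s \<le> k" using True that by simp
      hence "(\<Sum>j\<in>{1..<?N}. if j = (k - s) div a \<and> s \<le> k then x $ i else 0) = 0"
        by (intro sum.neutral) auto
      thus ?thesis using c1 c2 True by simp
    next
      case False
      define j0 where "j0 = (k - s) div a"
      have "a div a \<le> (k - s) div a" using False by (intro div_le_mono) simp
      hence "1 \<le> j0" using a by (simp add: j0_def)
      moreover have "j0 < ?N" using k(1) div_le_dividend[of "k-s" a] unfolding j0_def by linarith
      ultimately have "(\<Sum>j\<in>{1..<?N}. if j = (k - s) div a \<and> s \<le> k then x $ i else 0) = x $ i"
        using False by (simp add: j0_def[symmetric])
      thus ?thesis using c1 c2 False by simp
    qed
  qed
qed

lemma shift_sum_le: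
  fixes g :: "nat \<Rightarrow> real"
  assumes "\<And>j. 0 \<le> g j"
  shows "(\<Sum>j\<in>{1..<N}. g (j - 1)) \<le> (\<Sum>j<N. g j)"
proof (cases N)
  case 0 thus ?thesis by simp
next
  case (Suc M)
  have "(\<Sum>j\<in>{1..<N}. g (j - 1)) = (\<Sum>j\<in>{Suc 0..<Suc M}. g (j - 1))" by (simp add: Suc)
  also have "\<dots> = (\<Sum>j\<in>{0..<M}. g j)" by (subst sum.atLeast_Suc_lessThan_Suc_shift) simp
  also have "\<dots> \<le> (\<Sum>j<N. g j)" using assms by (intro sum_mono2) (auto simp: Suc)
  finally show ?thesis .
qed

lemma blk_union_sum:
  fixes f :: "nat \<Rightarrow> real"
  assumes "\<And>k. 0 \<le> f k" "0 < a"
  shows "(\<Sum>j<N. \<Sum>k\<in>blk s a N j. f k) \<le> (\<Sum>k\<in>{s..<N}. f k)"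
proof -
  have "(\<Sum>j<N. \<Sum>k\<in>blk s a N j. f k) = sum f (\<Union>j<N. blk s a N j)"
    apply (rule sum.UNION_disjoint[symmetric])
      apply simp
     apply (simp add: blk_def)
    apply (auto simp: blk_iff[OF assms(2)])
    done
  also have "\<dots> \<le> (\<Sum>k\<in>{s..<N}. f k)"
    using assms by (intro sum_mono2) (auto simp: blk_def)
  finally show ?thesis .
qed

lemma sq_powr: "0 \<le> (t::real) \<Longrightarrow> (t\<^sup>2) powr (q/2) = t powr q"
proof -
  assume t: "0 \<le> t"
  have "t\<^sup>2 = t powr 2" using t by (rule powr_numeral[symmetric])
  hence "(t\<^sup>2) powr (q/2) = t powr (2 * (q/2))" by (simp only: powr_powr)
  also have "2 * (q/2) = q" by simp
  finally show ?thesis .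
qed
lemma sqrt_powr: "0 < L \<Longrightarrow> sqrt L powr q = L powr (q/2)"
proof -
  assume L: "0 < L"
  have "sqrt L = L powr (1/2)" using L by (intro powr_half_sqrt[symmetric]) simp
  hence "sqrt L powr q = L powr (1/2 * q)" by (simp only: powr_powr)
  also have "1/2 * q = q/2" by simp
  finally show ?thesis .
qed

theorem lemma2p6:
  fixes D :: "real^'d^'n" and A :: "real^'n^'m" and h :: "real^'n"
    and q L U :: real and s a :: nat and \<sigma> :: "nat \<Rightarrow> 'd"
  assumes "0 < q" and "q \<le> 1"
    and "is_frame D L U"
    and "0 < s" and "s < a"
    and "\<exists>\<delta>. dq_RIP D A q (s + a) \<delta>"
    and "decreasing_order (transpose D *v h) \<sigma>"
  shows "(norm (D *v restr (\<sigma> ` {..<min (s + a) CARD('d)}) (transpose D *v h)))\<^sup>2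
    \<le> (U / L) * U
       * ((1 + rip_const D A q a) / (1 - rip_const D A q (s + a))) powr (2 / q)
       * real a powr (1 - 2 / q)
       * (qnorm_pow q (restr (UNIV - \<sigma> ` {..<min s CARD('d)}) (transpose D *v h))
          + L powr (q / 2) * real a powr (1 - q / 2) * qnorm_pow q (A *v h)
            / (1 + rip_const D A q a)) powr (2 / q)"
proof -
  let ?N = "CARD('d)"
  define x where "x = transpose D *v h"
  define \<delta>1 where "\<delta>1 = rip_const D A q a"
  define \<delta>2 where "\<delta>2 = rip_const D A q (s + a)"
  have q: "0 < q" "q \<le> 1" using assms by auto
  have fr: "is_frame D L U" using assms by simp
  obtain \<delta>0 where d0: "dq_RIP D A q (s+a) \<delta>0" using assms(6) by blast
  have R2: "dq_RIP D A q (s+a) \<delta>2" unfolding \<delta>2_def by (rule rip_const_RIP) (use d0 in blast)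
  have R1: "dq_RIP D A q a \<delta>1" unfolding \<delta>1_def
    by (rule rip_const_RIP) (use dq_RIP_mono[OF d0, of a] in auto)
  have d1: "0 \<le> \<delta>1" "\<delta>1 < 1" using R1 by (auto simp: dq_RIP_def)
  have d2: "0 \<le> \<delta>2" "\<delta>2 < 1" using R2 by (auto simp: dq_RIP_def)
  have L: "0 < L" and U: "0 \<le> U" using fr by (auto simp: is_frame_def)
  have ord: "bij_betw \<sigma> {..<?N} UNIV"
    and dec: "\<And>i j. i \<le> j \<Longrightarrow> j < ?N \<Longrightarrow> \<bar>x $ \<sigma> j\<bar> \<le> \<bar>x $ \<sigma> i\<bar>"
    using assms(7) by (auto simp: decreasing_order_def x_def)
  have a: "0 < a" using assms by simp
  define v0 where "v0 = restr (\<sigma> ` {..<min (s+a) ?N}) x"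
  define u where "u j = restr (\<sigma> ` blk s a ?N j) x" for j
  define J where "J = {1..<?N}"
  define P where "P = norm (dagger D *v v0)"
  define Qh where "Qh = qnorm_pow q (A *v h)"
  define R where "R = qnorm_pow q (restr (UNIV - \<sigma> ` {..<min s ?N}) x)"
  have hx: "h = dagger D *v x" using dagger_props(2)[OF fr] x_def by simp
  have xdec: "x = v0 + (\<Sum>j\<in>J. u j)"
    using decomp[OF ord a, of x s] unfolding v0_def u_def J_def .
  have sp0: "card {i. v0 $ i \<noteq> 0} \<le> s + a"
  proof -
    have "card {i. v0 $ i \<noteq> 0} \<le> card (\<sigma> ` {..<min (s+a) ?N})" by (simp add: v0_def restr_sparse)
    also have "\<dots> \<le> card {..<min (s+a) ?N}" by (rule card_image_le) simp
    also have "\<dots> \<le> s + a" by simp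
    finally show ?thesis .
  qed
  have spj: "card {i. u j $ i \<noteq> 0} \<le> a" for j
  proof -
    have "card {i. u j $ i \<noteq> 0} \<le> card (\<sigma> ` blk s a ?N j)" by (simp add: u_def restr_sparse)
    also have "\<dots> \<le> card (blk s a ?N j)" by (rule card_image_le) (simp add: blk_def)
    also have "\<dots> \<le> card {s + j*a..<s+(j+1)*a}" unfolding blk_def by (rule card_mono) auto
    also have "\<dots> = a" by simp
    finally show ?thesis .
  qed
  have F1: "(1 - \<delta>2) * P powr q \<le> qnorm_pow q (A *v (dagger D *v v0))"
    using R2[unfolded dq_RIP_def, THEN conjunct2, THEN conjunct2, rule_format, OF sp0] unfolding P_def by (rule conjunct1)
  have F3: "qnorm_pow q (A *v (dagger D *v u j)) \<le> (1 + \<delta>1) / L powr (q/2) * norm (u j) powr q" for j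
  proof -
    have 1: "qnorm_pow q (A *v (dagger D *v u j)) \<le> (1 + \<delta>1) * norm (dagger D *v u j) powr q"
      using R1[unfolded dq_RIP_def, THEN conjunct2, THEN conjunct2, rule_format, OF spj[of j]] by (rule conjunct2)
    have "norm (dagger D *v u j) powr q \<le> (norm (u j) / sqrt L) powr q"
      using dagger_bound[OF fr] q by (intro powr_mono2) auto
    also have "(norm (u j) / sqrt L) powr q = norm (u j) powr q / L powr (q/2)"
      by (simp only: powr_divide sqrt_powr[OF L])
    finally have 2: "norm (dagger D *v u j) powr q \<le> norm (u j) powr q / L powr (q/2)" .
    have "(1 + \<delta>1) * norm (dagger D *v u j) powr q \<le> (1 + \<delta>1) * (norm (u j) powr q / L powr (q/2))"
      using 2 d1 by (intro mult_left_mono) auto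
    with 1 show ?thesis by simp
  qed
  have "A *v h = A *v (dagger D *v v0) + (\<Sum>j\<in>J. A *v (dagger D *v u j))"
    by (simp only: hx xdec matrix_vector_right_distrib mv_sum[OF finite_atLeastLessThan] J_def)
  hence eq: "A *v (dagger D *v v0) = A *v h + - (\<Sum>j\<in>J. A *v (dagger D *v u j))"
    by (simp add: algebra_simps)
  have F2: "qnorm_pow q (A *v (dagger D *v v0)) \<le> Qh + (\<Sum>j\<in>J. qnorm_pow q (A *v (dagger D *v u j)))"
  proof -
    have "qnorm_pow q (A *v (dagger D *v v0)) \<le> Qh + qnorm_pow q (- (\<Sum>j\<in>J. A *v (dagger D *v u j)))"
      unfolding eq Qh_def by (rule qnorm_pow_add[OF q])
    also have "qnorm_pow q (- (\<Sum>j\<in>J. A *v (dagger D *v u j))) \<le> (\<Sum>j\<in>J. qnorm_pow q (A *v (dagger D *v u j)))"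
      unfolding qnorm_pow_minus by (rule qnorm_pow_sum[OF q]) (simp add: J_def)
    finally show ?thesis by simp
  qed
  have setR: "UNIV - \<sigma> ` {..<min s ?N} = \<sigma> ` {s..<?N}"
  proof -
    have inj: "inj_on \<sigma> {..<?N}" and im: "\<sigma> ` {..<?N} = UNIV" using ord by (auto simp: bij_betw_def)
    have "\<sigma> ` {..<?N} - \<sigma> ` {..<min s ?N} = \<sigma> ` ({..<?N} - {..<min s ?N})"
      by (rule inj_on_image_set_diff[symmetric, OF inj]) auto
    also have "{..<?N} - {..<min s ?N} = {s..<?N}" by auto
    finally show ?thesis using im by simp
  qed
  have F4: "(\<Sum>j\<in>J. norm (u j) powr q) \<le> real a powr (q/2-1) * R"
  proof -
    define g where "g i = (\<Sum>k\<in>blk s a ?N i. \<bar>x $ \<sigma> k\<bar> powr q)" for i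
    have "(\<Sum>j\<in>J. norm (u j) powr q) \<le> (\<Sum>j\<in>J. real a powr (q/2-1) * g (j - 1))"
    proof (rule sum_mono)
      fix j assume j: "j \<in> J"
      have "norm (u j) powr q = ((norm (u j))\<^sup>2) powr (q/2)" by (simp add: sq_powr)
      also have "\<dots> = (\<Sum>k\<in>blk s a ?N (Suc (j - 1)). (\<bar>x $ \<sigma> k\<bar>)\<^sup>2) powr (q/2)"
        using j restr_sums(2)[OF ord blk_sub] by (simp add: u_def J_def)
      also have "\<dots> \<le> real a powr (q/2-1) * g (j - 1)"
        unfolding g_def by (rule block_bound[OF q a]) (use dec in auto)
      finally show "norm (u j) powr q \<le> real a powr (q/2-1) * g (j - 1)" .
    qed
    also have "\<dots> = real a powr (q/2-1) * (\<Sum>j\<in>J. g (j - 1))" by (simp add: sum_distrib_left)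
    also have "\<dots> \<le> real a powr (q/2-1) * (\<Sum>j<?N. g j)"
      unfolding J_def by (intro mult_left_mono shift_sum_le) (auto simp: g_def sum_nonneg)
    also have "\<dots> \<le> real a powr (q/2-1) * (\<Sum>k\<in>{s..<?N}. \<bar>x $ \<sigma> k\<bar> powr q)"
      unfolding g_def by (intro mult_left_mono blk_union_sum a) auto
    also have "(\<Sum>k\<in>{s..<?N}. \<bar>x $ \<sigma> k\<bar> powr q) = R"
      unfolding R_def setR by (rule restr_sums(1)[OF ord, symmetric]) auto
    finally show ?thesis .
  qed
  define c where "c = 1 + \<delta>1"
  define e where "e = 1 - \<delta>2"
  define Lq where "Lq = L powr (q/2)"
  define \<alpha> where "\<alpha> = real a powr (q/2-1)"
  define \<beta> where "\<beta> = real a powr (1 - q/2)"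
  define W where "W = R + Lq * \<beta> * Qh / c"
  define Z where "Z = (c / e) * (\<alpha> / Lq) * W"
  have c: "0 < c" and e: "0 < e" using d1 d2 by (auto simp: c_def e_def)
  have Lq: "0 < Lq" using L by (simp add: Lq_def)
  have \<alpha>: "0 < \<alpha>" using a by (simp add: \<alpha>_def)
  have \<beta>: "\<beta> = 1 / \<alpha>"
  proof -
    have "\<alpha> * \<beta> = real a powr ((q/2-1) + (1 - q/2))" unfolding \<alpha>_def \<beta>_def by (rule powr_add[symmetric])
    also have "\<dots> = 1" using a by simp
    finally show ?thesis using \<alpha> by (simp add: field_simps)
  qed
  have R0: "0 \<le> R" and Qh0: "0 \<le> Qh" by (simp_all add: R_def Qh_def qnorm_pow_nonneg)
  have W0: "0 \<le> W" unfolding W_def \<beta> using R0 Qh0 c Lq \<alpha> by simp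
  have P0: "0 \<le> P" by (simp add: P_def)
  have sumF3: "(\<Sum>j\<in>J. qnorm_pow q (A *v (dagger D *v u j))) \<le> c / Lq * (\<alpha> * R)"
  proof -
    have "(\<Sum>j\<in>J. qnorm_pow q (A *v (dagger D *v u j))) \<le> (\<Sum>j\<in>J. c / Lq * norm (u j) powr q)"
      by (rule sum_mono) (use F3 in \<open>simp add: c_def Lq_def\<close>)
    also have "\<dots> = c / Lq * (\<Sum>j\<in>J. norm (u j) powr q)" by (simp add: sum_distrib_left)
    also have "\<dots> \<le> c / Lq * (\<alpha> * R)" using F4 c Lq by (intro mult_left_mono) (auto simp: \<alpha>_def)
    finally show ?thesis .
  qed
  have key: "e * P powr q \<le> Qh + c / Lq * (\<alpha> * R)" using F1 F2 sumF3 unfolding e_def by linarith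
  have eqW: "Qh + c / Lq * (\<alpha> * R) = e * Z"
    unfolding Z_def W_def \<beta> using c e Lq \<alpha> by (simp add: field_simps)
  have PZ: "P powr q \<le> Z" using key eqW e by (simp add: mult_le_cancel_left_pos)
  have "P\<^sup>2 = (P powr q) powr (2/q)"
  proof -
    have "(P powr q) powr (2/q) = P powr (q * (2/q))" by (simp only: powr_powr)
    also have "q * (2/q) = 2" using q by simp
    finally show ?thesis using P0 by simp
  qed
  also have "\<dots> \<le> Z powr (2/q)" using PZ q by (intro powr_mono2) auto
  also have "\<dots> = (c/e) powr (2/q) * (\<alpha> / Lq) powr (2/q) * W powr (2/q)"
    unfolding Z_def by (simp only: powr_mult)
  also have "(\<alpha> / Lq) powr (2/q) = real a powr (1 - 2/q) / L"
  proof -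
    have "(\<alpha> / Lq) powr (2/q) = \<alpha> powr (2/q) / Lq powr (2/q)" by (rule powr_divide)
    also have "\<alpha> powr (2/q) = real a powr ((q/2-1) * (2/q))" unfolding \<alpha>_def by (rule powr_powr)
    also have "(q/2-1) * (2/q) = 1 - 2/q" using q by (simp add: field_simps)
    also have "Lq powr (2/q) = L powr (q/2 * (2/q))" unfolding Lq_def by (rule powr_powr)
    also have "q/2 * (2/q) = 1" using q by simp
    finally show ?thesis using L by simp
  qed
  finally have P2: "P\<^sup>2 \<le> (c/e) powr (2/q) * (real a powr (1 - 2/q) / L) * W powr (2/q)" .
  have "norm (D *v v0) \<le> U * P" unfolding P_def by (rule D_dagger_bound[OF fr])
  hence "(norm (D *v v0))\<^sup>2 \<le> (U * P)\<^sup>2" by (rule power_mono) simp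
  also have "\<dots> = U\<^sup>2 * P\<^sup>2" by (simp add: power_mult_distrib)
  also have "\<dots> \<le> U\<^sup>2 * ((c/e) powr (2/q) * (real a powr (1 - 2/q) / L) * W powr (2/q))"
    using P2 by (intro mult_left_mono) auto
  also have "\<dots> = (U / L) * U * (c/e) powr (2/q) * real a powr (1 - 2/q) * W powr (2/q)"
    using L by (simp add: field_simps power2_eq_square)
  finally have goal: "(norm (D *v v0))\<^sup>2 \<le> (U / L) * U * (c/e) powr (2/q) * real a powr (1 - 2/q) * W powr (2/q)" .
  show ?thesis using goal
    by (simp only: v0_def x_def c_def e_def W_def R_def Qh_def Lq_def \<beta>_def \<delta>1_def \<delta>2_def)
qed

end
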